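(* Let $\nu$ be a Borel probability measure on $\operatorname{Diff}^{1+\tau}(\mathbb{S}^1)$ (some $\tau>0$) satisfying $$\int\log\sup_{x}|f'(x)|\,d\nu(f)<\infty\quad\text{and}\quad\int\log\inf_{x}|f'(x)|\,d\nu(f)>-\infty,$$ such that $\Gamma_\nu$ is proximal and does not fix any point in $\mathbb{S}^1$. Then for $\nu^{\mathbb{N}}$-almost every $(f_n)_{n\in\mathbb{N}}\in X_\nu^{\mathbb{N}}$, $$\lim_{n\to\infty}\frac1n\sum_{j=1}^n\alpha_{f_j}(\varepsilon_j)=0$$ for every sequence $(\varepsilon_n)_{n\in\mathbb{N}}$ of positive real numbers converging to $0$.
   Context: $\mathbb{S}^1=\mathbb{R}/\mathbb{Z}$ with usual metric $d$. $\operatorname{Diff}^{1+\tau}(\mathbb{S}^1)$ is the group of $C^1$ diffeomorphisms of $\mathbb{S}^1$ (orientation preserving or reversing) with $\tau$-Hölder derivative. $X_\nu$ is the topological support of $\nu$, $\Gamma_\nu$ the semigroup generated by $X_\nu$; $\Gamma_\nu$ is proximal if for all $x,y$ there exists $(g_n)$ in $\Gamma_\nu$ with $d(g_n(x),g_n(y))\to0$; it does not fix any point if no $x$ satisfies $f(x)=x$ for all $f\in\Gamma_\nu$. $\nu^{\mathbb{N}}$ is the product measure on $X_\nu^{\mathbb{N}}$. For $f\in\operatorname{Diff}^{1+\tau}(\mathbb{S}^1)$ and $\varepsilon>0$, $\alpha_f(\varepsilon)=\sup_{d(x,y)\le\varepsilon}\left|\log\frac{|f'(x)|}{|f'(y)|}\right|$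 is the modulus of continuity of $\log|f'|$. *)

theory Defs
  imports "HOL-Probability.Probability"
begin

text \<open>The circle S^1 = R/Z is modelled by real numbers read modulo 1.
  Its metric: distance to the nearest integer of the difference.\<close>
definition cdist :: "real \<Rightarrow> real \<Rightarrow> real" where
  "cdist x y = \<bar>(x - y) - of_int (round (x - y))\<bar>"

text \<open>A circle map f is represented by its normalized lift F : R -> R
  (F(x+1) = F(x) + 1 or F(x+1) = F(x) - 1, and 0 <= F 0 < 1); this is a
  bijection between circle maps of degree +1/-1 and normalized lifts.\<close>
definition Diff1t :: "real \<Rightarrow> (real \<Rightarrow> real) set" where
  "Diff1t \<tau> = {F. 0 \<le> F 0 \<and> F 0 < 1 \<and>
      ((\<forall>x. F (x + 1) = F x + 1) \<or> (\<forall>x. F (x + 1) = F x - 1)) \<and>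
      (\<exists>F'. (\<forall>x. (F has_real_derivative F' x) (at x)) \<and> continuous_on UNIV F' \<and>
            (\<forall>x. F' x \<noteq> 0) \<and>
            (\<exists>C. \<forall>x y. \<bar>F' x - F' y\<bar> \<le> C * cdist x y powr \<tau>))}"

definition C1dist :: "(real \<Rightarrow> real) \<Rightarrow> (real \<Rightarrow> real) \<Rightarrow> real" where
  "C1dist F G = (SUP x\<in>{0..1}. cdist (F x) (G x)) + (SUP x\<in>{0..1}. \<bar>deriv F x - deriv G x\<bar>)"

definition C1open :: "real \<Rightarrow> (real \<Rightarrow> real) set \<Rightarrow> bool" where
  "C1open \<tau> U \<longleftrightarrow> U \<subseteq> Diff1t \<tau> \<and>
     (\<forall>F\<in>U. \<exists>r>0. \<forall>G\<in>Diff1t \<tau>. C1dist F G < r \<longrightarrow> G \<in> U)"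

definition supp :: "real \<Rightarrow> (real \<Rightarrow> real) measure \<Rightarrow> (real \<Rightarrow> real) set" where
  "supp \<tau> \<nu> = {F \<in> Diff1t \<tau>. \<forall>U. C1open \<tau> U \<and> F \<in> U \<longrightarrow> emeasure \<nu> U > 0}"

inductive_set semigr :: "(real \<Rightarrow> real) set \<Rightarrow> (real \<Rightarrow> real) set" for X where
  gen: "F \<in> X \<Longrightarrow> F \<in> semigr X"
| comp: "F \<in> semigr X \<Longrightarrow> G \<in> semigr X \<Longrightarrow> F \<circ> G \<in> semigr X"

definition proximal :: "(real \<Rightarrow> real) set \<Rightarrow> bool" where
  "proximal \<Gamma> \<longleftrightarrow> (\<forall>x y. \<exists>g::nat \<Rightarrow> real \<Rightarrow> real. (\<forall>n. g n \<in> \<Gamma>) \<and>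
       (\<lambda>n. cdist (g n x) (g n y)) \<longlonglongrightarrow> 0)"

definition fixes_point :: "(real \<Rightarrow> real) set \<Rightarrow> bool" where
  "fixes_point \<Gamma> \<longleftrightarrow> (\<exists>x. \<forall>f\<in>\<Gamma>. cdist (f x) x = 0)"

definition alpha :: "(real \<Rightarrow> real) \<Rightarrow> real \<Rightarrow> real" where
  "alpha F \<epsilon> = (SUP xy\<in>{(x, y). cdist x y \<le> \<epsilon>}.
      \<bar>ln (\<bar>deriv F (fst xy)\<bar> / \<bar>deriv F (snd xy)\<bar>)\<bar>)"

end

theory Submission
  imports Defs
begin


lemma count_le2:
  fixes y :: real assumes "0 \<le> y"
  shows "(\<Sum>j<K. (if real j < y then 1 else 0::real)) \<le> real K \<and>
         (\<Sum>j<K. (if real j < y then 1 else 0::real)) \<le> y + 1"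
proof (induction K)
  case 0 then show ?case using assms by simp
next
  case (Suc K)
  define S where "S = (\<Sum>j<K. (if real j < y then 1 else 0::real))"
  have IH: "S \<le> real K" "S \<le> y + 1" using Suc.IH unfolding S_def by auto
  have eq: "(\<Sum>j<Suc K. (if real j < y then 1 else 0::real)) = S + (if real K < y then 1 else 0)"
    unfolding S_def by (rule sum.lessThan_Suc)
  show ?case unfolding eq
  proof (cases "real K < y")
    case True then show "S + (if real K < y then 1 else 0) \<le> real (Suc K) \<and> S + (if real K < y then 1 else 0) \<le> y + 1"
      using IH by simp
  next
    case False then show "S + (if real K < y then 1 else 0) \<le> real (Suc K) \<and> S + (if real K < y then 1 else 0) \<le> y + 1"
      using IH by simp
  qed
qed

lemma count_le:
  fixes y :: real assumes "0 \<le> y"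
  shows "(\<Sum>j<K. (if real j < y then 1 else 0::real)) \<le> min (real K) (y + 1)"
  using count_le2[OF assms, of K] by simp

lemma geom_tail:
  "(\<Sum>k<K. (if k0 \<le> k then (1/2::real)^k else 0)) =
     (if K \<le> k0 then 0 else 2*(1/2)^k0 - 2*(1/2)^K)"
proof (induction K)
  case 0 then show ?case by simp
next
  case (Suc K)
  then show ?case
  proof (cases "Suc K \<le> k0")
    case True then show ?thesis using Suc.IH by simp
  next
    case False
    show ?thesis
    proof (cases "K \<le> k0")
      case True
      then have "K = k0" using False by simp
      then show ?thesis using Suc.IH by simp
    next
      case F2: False
      then show ?thesis using Suc.IH False by simp
    qed
  qed
qed

lemma geom_bound:
  fixes y :: real assumes "0 \<le> y"
  shows "(\<Sum>k<K. (if y \<le> 2^k then y^2 / 2^k else 0)) \<le> 2 * y"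
proof -
  have ex: "\<exists>k. y \<le> 2^k" using real_arch_pow[of 2 y] by (auto intro: less_imp_le)
  define k0 where "k0 = (LEAST k. y \<le> (2::real)^k)"
  have k0: "y \<le> 2^k0" unfolding k0_def by (rule LeastI_ex[OF ex])
  have kk: "y \<le> 2^k \<Longrightarrow> k0 \<le> k" for k unfolding k0_def by (rule Least_le)
  have "(\<Sum>k<K. (if y \<le> 2^k then y^2 / 2^k else 0)) \<le> (\<Sum>k<K. y^2 * (if k0 \<le> k then (1/2::real)^k else 0))"
  proof (rule sum_mono)
    fix k assume "k \<in> {..<K}"
    show "(if y \<le> 2^k then y^2 / 2^k else 0) \<le> y^2 * (if k0 \<le> k then (1/2::real)^k else 0)"
    proof (cases "y \<le> 2^k")
      case True
      then have "k0 \<le> k" by (rule kk)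
      moreover have "y^2 / 2^k = y^2 * (1/2::real)^k" by (simp add: power_one_over)
      ultimately show ?thesis using True by simp
    next
      case False then show ?thesis by simp
    qed
  qed
  also have "\<dots> = y^2 * (\<Sum>k<K. (if k0 \<le> k then (1/2::real)^k else 0))"
    by (simp add: sum_distrib_left)
  also have "\<dots> \<le> y^2 * (2*(1/2)^k0)"
    unfolding geom_tail by (intro mult_left_mono) auto
  also have "\<dots> = 2 * y * (y / 2^k0)" by (simp add: power2_eq_square power_divide)
  also have "\<dots> \<le> 2 * y * 1"
    using k0 assms by (intro mult_left_mono) auto
  finally show ?thesis by simp
qed
lemma slln_upper:
  fixes M :: "'a measure" and Y :: "'a \<Rightarrow> real" and \<eta> :: real
  assumes M: "prob_space M" and Ym[measurable]: "Y \<in> borel_measurable M"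
    and Y0: "\<And>x. x \<in> space M \<Longrightarrow> 0 \<le> Y x" and Yi: "integrable M Y" and eta: "\<eta> > 0"
  shows "AE \<omega> in (\<Pi>\<^sub>M n\<in>(UNIV::nat set). M). \<exists>C. \<forall>\<^sub>F n in sequentially.
            (\<Sum>j=1..n. Y (\<omega> j)) \<le> C + 2 * real n * (integral\<^sup>L M Y + \<eta>)"
proof -
  interpret M: prob_space M by fact
  interpret PP: product_prob_space "\<lambda>_. M" "UNIV :: nat set" by unfold_locales
  define P where "P = (\<Pi>\<^sub>M n\<in>(UNIV::nat set). M)"
  interpret P: prob_space P unfolding P_def by (rule prob_space_PiM) (rule M)
  define E where "E = integral\<^sup>L M Y"
  have comp_meas[measurable]: "(\<lambda>\<omega>. \<omega> j) \<in> measurable P M" for j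
    unfolding P_def by measurable
  have comp_int: "(\<integral>\<omega>. f (\<omega> j) \<partial>P) = (\<integral>x. f x \<partial>M)" if [measurable]: "f \<in> borel_measurable M" for f :: "'a \<Rightarrow> real" and j
  proof -
    have "(\<integral>x. f x \<partial>M) = (\<integral>x. f x \<partial>distr P M (\<lambda>\<omega>. \<omega> j))"
      using PP.PiM_component[of j] unfolding P_def by simp
    also have "\<dots> = (\<integral>\<omega>. f (\<omega> j) \<partial>P)"
      by (rule integral_distr) measurable
    finally show ?thesis by simp
  qed
  have comp_meas_eq: "measure P {\<omega>\<in>space P. \<omega> j \<in> A} = measure M A" if "A \<in> sets M" for A j
  proof -
    have "measure M A = measure (distr P M (\<lambda>\<omega>. \<omega> j)) A"
      using PP.PiM_component[of j] unfolding P_def by simp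
    also have "\<dots> = measure P ((\<lambda>\<omega>. \<omega> j) -` A \<inter> space P)"
      by (rule measure_distr) (use that in auto)
    also have "(\<lambda>\<omega>. \<omega> j) -` A \<inter> space P = {\<omega>\<in>space P. \<omega> j \<in> A}" by auto
    finally show ?thesis by simp
  qed
  have ind: "P.indep_vars (\<lambda>_. M) (\<lambda>i \<omega>. \<omega> i) UNIV"
  proof (subst P.indep_vars_iff_distr_eq_PiM)
    show "distr P (Pi\<^sub>M UNIV (\<lambda>i. M)) (\<lambda>x. restrict (\<lambda>i. x i) UNIV) = Pi\<^sub>M UNIV (\<lambda>i. distr P M (\<lambda>\<omega>. \<omega> i))"
      using PP.PiM_component unfolding P_def by (simp add: restrict_UNIV distr_id2)
  qed auto
  have Ysp: "\<omega> \<in> space P \<Longrightarrow> \<omega> j \<in> space M" for \<omega> j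
    unfolding P_def by (auto simp: space_PiM)
  have E0: "0 \<le> E" unfolding E_def by (rule Bochner_Integration.integral_nonneg) (rule Y0)
  define h where "h j x = (if Y x \<le> real j then Y x else 0)" for j x
  have hm[measurable]: "h j \<in> borel_measurable M" for j unfolding h_def by measurable
  have h0: "x \<in> space M \<Longrightarrow> 0 \<le> h j x" for j x using Y0 unfolding h_def by auto
  have hle: "x \<in> space M \<Longrightarrow> h j x \<le> real j" for j x using Y0 unfolding h_def by auto
  have hY: "x \<in> space M \<Longrightarrow> h j x \<le> Y x" for j x using Y0 unfolding h_def by auto
  have hmono: "j \<le> m \<Longrightarrow> x \<in> space M \<Longrightarrow> h j x \<le> h m x" for j m x
    using Y0 unfolding h_def by auto
  have hint: "integrable M (h j)" for j
    by (rule M.integrable_const_bound[where B="real j"]) (use h0 hle in auto)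
  have hint2: "integrable M (\<lambda>x. h j x * h j x)" for j
    by (rule M.integrable_const_bound[where B="real j * real j"]) (use h0 hle in \<open>auto intro!: mult_mono\<close>)
  have hPint: "integrable P (\<lambda>\<omega>. h j (\<omega> j))" for j
    by (rule P.integrable_const_bound[where B="real j"]) (use h0 hle Ysp in auto)
  have hPint2: "integrable P (\<lambda>\<omega>. h i (\<omega> i) * h j (\<omega> j))" for i j
    by (rule P.integrable_const_bound[where B="real i * real j"]) (use h0 hle Ysp in \<open>auto intro!: mult_mono simp: abs_mult\<close>)
  have indh: "P.indep_vars (\<lambda>_. borel) (\<lambda>i \<omega>. h i (\<omega> i)) UNIV"
    by (rule P.indep_vars_compose2[OF ind]) simp
  have ind2: "(\<integral>\<omega>. h i (\<omega> i) * h j (\<omega> j) \<partial>P) = (\<integral>x. h i x \<partial>M) * (\<integral>x. h j x \<partial>M)"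
    if "i \<noteq> j" for i j
  proof -
    have "P.indep_vars (\<lambda>_. borel) (\<lambda>i \<omega>. h i (\<omega> i)) {i, j}"
      by (rule P.indep_vars_subset[OF indh]) auto
    from P.indep_vars_lebesgue_integral[OF _ this] hPint
    have "(\<integral>\<omega>. (\<Prod>l\<in>{i,j}. h l (\<omega> l)) \<partial>P) = (\<Prod>l\<in>{i,j}. \<integral>\<omega>. h l (\<omega> l) \<partial>P)"
      by auto
    then show ?thesis using that by (simp add: comp_int)
  qed
  define T where "T n \<omega> = (\<Sum>j\<in>{1..n}. h j (\<omega> j))" for n \<omega>
  have Tm[measurable]: "T n \<in> borel_measurable P" for n unfolding T_def by measurable
  have T0: "\<omega> \<in> space P \<Longrightarrow> 0 \<le> T n \<omega>" for n \<omega>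
    unfolding T_def using h0 Ysp by (intro sum_nonneg) auto
  have Tle: "\<omega> \<in> space P \<Longrightarrow> T n \<omega> \<le> real n * real n" for n \<omega>
  proof -
    assume "\<omega> \<in> space P"
    then have "T n \<omega> \<le> (\<Sum>j\<in>{1..n}. real n)"
      unfolding T_def
    proof (intro sum_mono)
      fix j assume "j \<in> {1..n}"
      have "h j (\<omega> j) \<le> real j" by (rule hle, rule Ysp, fact)
      with \<open>j \<in> {1..n}\<close> show "h j (\<omega> j) \<le> real n" by auto
    qed
    then show ?thesis by simp
  qed
  have Tint: "integrable P (T n)" for n
    by (rule P.integrable_const_bound[where B="real n * real n"]) (use T0 Tle in auto)
  have Tint2: "integrable P (\<lambda>\<omega>. (T n \<omega>)^2)" for n
    by (rule P.integrable_const_bound[where B="(real n * real n)^2"])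
       (use T0 Tle in \<open>auto intro!: power_mono\<close>)
  have ET: "P.expectation (T n) = (\<Sum>j\<in>{1..n}. \<integral>x. h j x \<partial>M)" for n
    unfolding T_def by (subst Bochner_Integration.integral_sum) (auto intro: hPint simp: comp_int)
  have ETle: "P.expectation (T n) \<le> real n * E" for n
  proof -
    have "P.expectation (T n) \<le> (\<Sum>j\<in>{1..n}. E)"
      unfolding ET E_def using hY by (intro sum_mono integral_mono hint Yi) auto
    then show ?thesis by simp
  qed
  have var: "P.variance (T n) \<le> (\<Sum>j\<in>{1..n}. \<integral>x. h j x * h j x \<partial>M)" for n
  proof -
    define I where "I = {1..n}"
    define c where "c i j = (\<integral>\<omega>. h i (\<omega> i) * h j (\<omega> j) \<partial>P)" for i j
    define m where "m i = (\<integral>x. h i x \<partial>M)" for i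
    have "P.variance (T n) = P.expectation (\<lambda>\<omega>. (T n \<omega>)\<^sup>2) - (P.expectation (T n))\<^sup>2"
      by (rule P.variance_eq[OF Tint Tint2])
    also have "P.expectation (\<lambda>\<omega>. (T n \<omega>)\<^sup>2) = (\<Sum>i\<in>I. \<Sum>j\<in>I. c i j)"
    proof -
      have sq: "(T n \<omega>)\<^sup>2 = (\<Sum>i\<in>I. \<Sum>j\<in>I. h i (\<omega> i) * h j (\<omega> j))" for \<omega>
        by (simp add: T_def I_def power2_eq_square sum_product)
      show ?thesis unfolding sq c_def
        by (subst Bochner_Integration.integral_sum)
           (auto intro!: Bochner_Integration.integral_sum integrable_sum hPint2 sum.cong)
    qed
    also have "(P.expectation (T n))\<^sup>2 = (\<Sum>i\<in>I. \<Sum>j\<in>I. m i * m j)"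
      by (simp add: ET I_def m_def power2_eq_square sum_product)
    also have "(\<Sum>i\<in>I. \<Sum>j\<in>I. c i j) - (\<Sum>i\<in>I. \<Sum>j\<in>I. m i * m j) = (\<Sum>i\<in>I. \<Sum>j\<in>I. c i j - m i * m j)"
      by (simp add: sum_subtractf)
    also have "\<dots> = (\<Sum>i\<in>I. c i i - m i * m i)"
    proof (rule sum.cong[OF refl])
      fix i assume i: "i \<in> I"
      have "(\<Sum>j\<in>I. c i j - m i * m j) = (\<Sum>j\<in>I. if i = j then c i i - m i * m i else 0)"
        by (rule sum.cong) (auto simp: c_def m_def ind2)
      also have "\<dots> = c i i - m i * m i" using i by (simp add: I_def)
      finally show "(\<Sum>j\<in>I. c i j - m i * m j) = c i i - m i * m i" .
    qed
    also have "\<dots> \<le> (\<Sum>i\<in>I. \<integral>x. h i x * h i x \<partial>M)"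
    proof (rule sum_mono)
      fix i
      have "c i i = (\<integral>x. h i x * h i x \<partial>M)" unfolding c_def
        using comp_int[of "\<lambda>x. h i x * h i x" i] by simp
      then show "c i i - m i * m i \<le> (\<integral>x. h i x * h i x \<partial>M)" by simp
    qed
    finally show ?thesis unfolding I_def .
  qed
  define B where "B k = {\<omega>\<in>space P. real (2^k) * (E + \<eta>) < T (2^k) \<omega>}" for k
  have Bm[measurable]: "B k \<in> sets P" for k unfolding B_def by measurable
  define g where "g k = (\<integral>x. h (2^k) x * h (2^k) x / 2^k \<partial>M)" for k
  have PB: "measure P (B k) \<le> g k / \<eta>\<^sup>2" for k
  proof -
    define n :: nat where "n = 2^k"
    have npos: "0 < real n" unfolding n_def by simp
    have sub: "B k \<subseteq> {\<omega>\<in>space P. real n * \<eta> \<le> \<bar>T n \<omega> - P.expectation (T n)\<bar>}"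
      using ETle[of n] unfolding B_def n_def[symmetric] by (auto simp: algebra_simps)
    have "measure P (B k) \<le> measure P {\<omega>\<in>space P. real n * \<eta> \<le> \<bar>T n \<omega> - P.expectation (T n)\<bar>}"
      by (rule P.finite_measure_mono[OF sub]) measurable
    also have "\<dots> \<le> P.variance (T n) / (real n * \<eta>)\<^sup>2"
      by (rule P.Chebyshev_inequality) (use Tint2 eta npos in auto)
    also have "\<dots> \<le> (real n * (\<integral>x. h n x * h n x \<partial>M)) / (real n * \<eta>)\<^sup>2"
    proof (rule divide_right_mono)
      have "(\<Sum>j\<in>{1..n}. \<integral>x. h j x * h j x \<partial>M) \<le> (\<Sum>j\<in>{1..n}. \<integral>x. h n x * h n x \<partial>M)"
      proof (rule sum_mono)
        fix j assume "j \<in> {1..n}"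
        then show "(\<integral>x. h j x * h j x \<partial>M) \<le> (\<integral>x. h n x * h n x \<partial>M)"
          by (intro integral_mono hint2) (auto intro!: mult_mono hmono h0)
      qed
      then show "P.variance (T n) \<le> real n * (\<integral>x. h n x * h n x \<partial>M)"
        using var[of n] by simp
    qed simp
    also have "\<dots> = ((\<integral>x. h n x * h n x \<partial>M) / real n) / \<eta>\<^sup>2"
      using npos eta by (simp add: field_simps power2_eq_square)
    also have "(\<integral>x. h n x * h n x \<partial>M) / real n = g k"
      unfolding g_def n_def by simp
    finally show ?thesis .
  qed
  have g0: "0 \<le> g k" for k
    unfolding g_def by (rule Bochner_Integration.integral_nonneg) (auto intro: h0)
  have gsum: "summable g"
  proof (rule summableI_nonneg_bounded[where x="2*E"])
    fix K
    have "sum g {..<K} = (\<integral>x. (\<Sum>k<K. h (2^k) x * h (2^k) x / 2^k) \<partial>M)"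
      unfolding g_def by (rule Bochner_Integration.integral_sum[symmetric]) (auto intro: hint2)
    also have "\<dots> \<le> (\<integral>x. 2 * Y x \<partial>M)"
    proof (rule integral_mono)
      show "integrable M (\<lambda>x. \<Sum>k<K. h (2^k) x * h (2^k) x / 2^k)" by (auto intro!: integrable_sum integrable_divide_zero hint2)
      show "integrable M (\<lambda>x. 2 * Y x)" using Yi by auto
      fix x assume x: "x \<in> space M"
      have "(\<Sum>k<K. h (2^k) x * h (2^k) x / 2^k) = (\<Sum>k<K. (if Y x \<le> 2^k then (Y x)^2 / 2^k else 0))"
        by (rule sum.cong) (auto simp: h_def power2_eq_square)
      also have "\<dots> \<le> 2 * Y x" by (rule geom_bound) (rule Y0[OF x])
      finally show "(\<Sum>k<K. h (2^k) x * h (2^k) x / 2^k) \<le> 2 * Y x" .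
    qed
    also have "\<dots> = 2 * E" unfolding E_def by simp
    finally show "sum g {..<K} \<le> 2 * E" .
  qed (rule g0)
  have Bsum: "summable (\<lambda>k. measure P (B k))"
    by (rule summable_comparison_test'[where g="\<lambda>k. g k / \<eta>\<^sup>2" and N=0])
       (use gsum PB in \<open>auto intro: summable_divide\<close>)
  have AE1: "AE \<omega> in P. eventually (\<lambda>k. \<omega> \<in> space P - B k) sequentially"
    by (rule borel_cantelli_AE1) (auto simp: Bsum P.emeasure_finite less_top[symmetric])
  define A where "A j = {\<omega>\<in>space P. real j < Y (\<omega> j)}" for j
  have Am[measurable]: "A j \<in> sets P" for j unfolding A_def by measurable
  have indint: "integrable M (\<lambda>x. if real j < Y x then 1 else 0::real)" for j
    by (rule M.integrable_const_bound[where B=1]) auto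
  have PA: "measure P (A j) = (\<integral>x. (if real j < Y x then 1 else 0) \<partial>M)" for j
  proof -
    have "A j = {\<omega>\<in>space P. \<omega> j \<in> {x\<in>space M. real j < Y x}}"
      unfolding A_def using Ysp by auto
    then have "measure P (A j) = measure M {x\<in>space M. real j < Y x}"
      using comp_meas_eq[of "{x\<in>space M. real j < Y x}" j] by simp
    also have "\<dots> = (\<integral>x. indicator {x\<in>space M. real j < Y x} x \<partial>M)"
      by (simp add: integral_indicator Int_absorb2)
    also have "\<dots> = (\<integral>x. (if real j < Y x then 1 else 0) \<partial>M)"
      by (rule Bochner_Integration.integral_cong) (auto simp: indicator_def)
    finally show ?thesis .
  qed
  have Asum: "summable (\<lambda>j. measure P (A j))"
  proof (rule summableI_nonneg_bounded[where x="E + 1"])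
    fix K
    have "(\<Sum>j<K. measure P (A j)) = (\<integral>x. (\<Sum>j<K. (if real j < Y x then 1 else 0)) \<partial>M)"
      unfolding PA by (rule Bochner_Integration.integral_sum[symmetric]) (auto intro: indint)
    also have "\<dots> \<le> (\<integral>x. Y x + 1 \<partial>M)"
    proof (rule integral_mono)
      show "integrable M (\<lambda>x. \<Sum>j<K. (if real j < Y x then 1 else 0::real))" by (auto intro!: integrable_sum indint)
      show "integrable M (\<lambda>x. Y x + 1)" using Yi by auto
      fix x assume x: "x \<in> space M"
      show "(\<Sum>j<K. (if real j < Y x then 1 else 0::real)) \<le> Y x + 1"
        using count_le[OF Y0[OF x], of K] by simp
    qed
    also have "\<dots> = E + 1" unfolding E_def using Yi by (simp add: M.prob_space)
    finally show "(\<Sum>j<K. measure P (A j)) \<le> E + 1" .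
  qed simp
  have AE2: "AE \<omega> in P. eventually (\<lambda>j. \<omega> \<in> space P - A j) sequentially"
    by (rule borel_cantelli_AE1) (auto simp: Asum P.emeasure_finite less_top[symmetric])
  have "AE \<omega> in P. \<exists>C. \<forall>\<^sub>F n in sequentially. (\<Sum>j=1..n. Y (\<omega> j)) \<le> C + 2 * real n * (E + \<eta>)"
    using AE1 AE2 AE_space
  proof eventually_elim
    case (elim \<omega>)
    note \<omega> = \<open>\<omega> \<in> space P\<close>
    from elim(1) obtain K where K: "\<And>k. k \<ge> K \<Longrightarrow> \<omega> \<notin> B k"
      unfolding eventually_sequentially using \<omega> by blast
    from elim(2) obtain N1 where N1: "\<And>j. j \<ge> N1 \<Longrightarrow> \<omega> \<notin> A j"
      unfolding eventually_sequentially using \<omega> by blast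
    define C where "C = (\<Sum>j<N1. Y (\<omega> j))"
    show ?case
    proof (intro exI[of _ C] eventually_sequentiallyI[of "2^K"])
      fix n :: nat assume n: "2^K \<le> n"
      have s1: "(\<Sum>j=1..n. Y (\<omega> j)) \<le> C + T n \<omega>"
      proof -
        have "(\<Sum>j=1..n. Y (\<omega> j)) \<le> (\<Sum>j=1..n. (if j \<in> {..<N1} then Y (\<omega> j) else 0) + h j (\<omega> j))"
        proof (rule sum_mono)
          fix j assume "j \<in> {1..n}"
          show "Y (\<omega> j) \<le> (if j \<in> {..<N1} then Y (\<omega> j) else 0) + h j (\<omega> j)"
          proof (cases "j < N1")
            case True then show ?thesis using h0[OF Ysp[OF \<omega>], of j] by simp
          next
            case False
            then have "\<omega> \<notin> A j" using N1 by simp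
            then have "Y (\<omega> j) \<le> real j" using \<omega> unfolding A_def by auto
            then show ?thesis using False unfolding h_def by simp
          qed
        qed
        also have "\<dots> = (\<Sum>j\<in>{1..n} \<inter> {..<N1}. Y (\<omega> j)) + T n \<omega>"
          unfolding T_def sum.distrib by (simp add: sum.inter_restrict)
        also have "(\<Sum>j\<in>{1..n} \<inter> {..<N1}. Y (\<omega> j)) \<le> C"
          unfolding C_def by (rule sum_mono2) (use Y0 Ysp \<omega> in auto)
        finally show ?thesis by simp
      qed
      have exk: "\<exists>k. n \<le> 2^k" using less_exp[of n] less_imp_le by blast
      define k where "k = (LEAST k. n \<le> 2^k)"
      have k: "n \<le> 2^k" unfolding k_def by (rule LeastI_ex[OF exk])
      have "(2::nat)^K \<le> 2^k" using n k by linarith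
      then have Kk: "K \<le> k" by simp
      have n1: "1 \<le> n"
      proof -
        have "(1::nat) \<le> 2^K" by simp
        then show ?thesis using n by linarith
      qed
      have k2: "2^k \<le> 2 * n"
      proof (cases k)
        case 0 then show ?thesis using n1 by simp
      next
        case (Suc k')
        have "k' < k" using Suc by simp
        then have "\<not> n \<le> 2^k'" unfolding k_def by (rule not_less_Least)
        moreover have "(2::nat)^k = 2 * 2^k'" using Suc by simp
        ultimately show ?thesis by linarith
      qed
      have k2r: "real (2^k) \<le> real (2 * n)" using k2 by (simp only: of_nat_le_iff)
      have "T n \<omega> \<le> T (2^k) \<omega>"
        unfolding T_def by (rule sum_mono2) (use k h0 Ysp \<omega> in auto)
      also have "\<dots> \<le> real (2^k) * (E + \<eta>)" using K[OF Kk] \<omega> unfolding B_def by auto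
      also have "\<dots> \<le> real (2 * n) * (E + \<eta>)"
        by (rule mult_right_mono[OF k2r]) (use E0 eta in linarith)
      also have "real (2 * n) = 2 * real n" by simp
      finally show "(\<Sum>j=1..n. Y (\<omega> j)) \<le> C + 2 * real n * (E + \<eta>)" using s1 by linarith
    qed
  qed
  then show ?thesis unfolding P_def E_def .
qed



lemma cdist_nonneg: "0 \<le> cdist x y" unfolding cdist_def by simp
lemma cdist_le_half: "cdist x y \<le> 1/2"
  unfolding cdist_def abs_le_iff using of_int_round_ge[of "x - y"] of_int_round_le[of "x - y"] by linarith
lemma cdist_refl[simp]: "cdist x x = 0" unfolding cdist_def by simp

lemma D1:
  assumes "F \<in> Diff1t \<tau>"
  shows D1_der: "\<And>x. (F has_real_derivative deriv F x) (at x)"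
    and D1_cont: "continuous_on UNIV (deriv F)"
    and D1_nz: "\<And>x. deriv F x \<noteq> 0"
    and D1_per: "\<And>x. deriv F (x + 1) = deriv F x"
proof -
  from assms obtain F' where der: "\<And>x. (F has_real_derivative F' x) (at x)"
    and cont: "continuous_on UNIV F'" and nz: "\<And>x. F' x \<noteq> 0"
    and per: "(\<forall>x. F (x + 1) = F x + 1) \<or> (\<forall>x. F (x + 1) = F x - 1)"
    unfolding Diff1t_def by blast
  have dd: "deriv F = F'" using der by (intro ext DERIV_imp_deriv)
  show "\<And>x. (F has_real_derivative deriv F x) (at x)" using der dd by simp
  show "continuous_on UNIV (deriv F)" using cont dd by simp
  show "\<And>x. deriv F x \<noteq> 0" using nz dd by simp
  obtain c where c: "\<And>x. F (x + 1) = F x + c" using per by (metis diff_conv_add_uminus)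
  fix x
  have "((\<lambda>x. F (x + 1)) has_real_derivative F' (x + 1)) (at x)"
    using der[of "x+1"] by (simp add: DERIV_shift)
  moreover have "((\<lambda>x. F x + c) has_real_derivative F' x + 0) (at x)"
    by (intro DERIV_add der DERIV_const)
  then have "((\<lambda>x. F (x + 1)) has_real_derivative F' x) (at x)" by (simp add: c)
  ultimately show "deriv F (x + 1) = deriv F x" unfolding dd by (rule DERIV_unique)
qed

lemma D_per_nat: "F \<in> Diff1t \<tau> \<Longrightarrow> deriv F (x + real n) = deriv F x"
proof (induction n arbitrary: x)
  case 0 then show ?case by simp
next
  case (Suc n)
  have "deriv F (x + real (Suc n)) = deriv F ((x + real n) + 1)" by (simp add: algebra_simps)
  also have "\<dots> = deriv F (x + real n)" by (rule D1_per[OF Suc.prems])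
  finally show ?case using Suc by simp
qed

lemma D_per_int: "F \<in> Diff1t \<tau> \<Longrightarrow> deriv F (x + of_int n) = deriv F x"
proof (cases "n \<ge> 0")
  case True
  assume F: "F \<in> Diff1t \<tau>"
  then show ?thesis using D_per_nat[OF F, of x "nat n"] True by simp
next
  case False
  assume F: "F \<in> Diff1t \<tau>"
  have "deriv F x = deriv F ((x + of_int n) + real (nat (-n)))" using False by simp
  also have "\<dots> = deriv F (x + of_int n)" by (rule D_per_nat[OF F])
  finally show ?thesis by simp
qed

lemma D_frac: "F \<in> Diff1t \<tau> \<Longrightarrow> deriv F x = deriv F (frac x)"
  using D_per_int[of F \<tau> x "- \<lfloor>x\<rfloor>"] by (simp add: frac_def)

definition Smax :: "(real \<Rightarrow> real) \<Rightarrow> real" where "Smax F = (SUP x. \<bar>deriv F x\<bar>)"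
definition Smin :: "(real \<Rightarrow> real) \<Rightarrow> real" where "Smin F = (INF x. \<bar>deriv F x\<bar>)"

lemma D_extrema:
  assumes F: "F \<in> Diff1t \<tau>"
  shows "\<exists>a. \<forall>x. \<bar>deriv F x\<bar> \<le> \<bar>deriv F a\<bar>" and "\<exists>b. \<forall>x. \<bar>deriv F b\<bar> \<le> \<bar>deriv F x\<bar>"
proof -
  have c: "continuous_on {0..1} (\<lambda>x. \<bar>deriv F x\<bar>)"
    by (intro continuous_intros continuous_on_subset[OF D1_cont[OF F]]) auto
  obtain a where a: "a \<in> {0..1}" "\<And>y. y \<in> {0..1} \<Longrightarrow> \<bar>deriv F y\<bar> \<le> \<bar>deriv F a\<bar>"
    using continuous_attains_sup[OF compact_Icc _ c] by auto
  obtain b where b: "b \<in> {0..1}" "\<And>y. y \<in> {0..1} \<Longrightarrow> \<bar>deriv F b\<bar> \<le> \<bar>deriv F y\<bar>"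
    using continuous_attains_inf[OF compact_Icc _ c] by auto
  have fr: "frac x \<in> {0..1}" for x using frac_lt_1[of x] frac_ge_0[of x] by auto
  show "\<exists>a. \<forall>x. \<bar>deriv F x\<bar> \<le> \<bar>deriv F a\<bar>"
    using a(2)[OF fr] D_frac[OF F] by metis
  show "\<exists>b. \<forall>x. \<bar>deriv F b\<bar> \<le> \<bar>deriv F x\<bar>"
    using b(2)[OF fr] D_frac[OF F] by metis
qed

lemma Smax_bound:
  assumes F: "F \<in> Diff1t \<tau>"
  shows "\<exists>a. Smax F = \<bar>deriv F a\<bar> \<and> (\<forall>x. \<bar>deriv F x\<bar> \<le> Smax F)"
proof -
  obtain a where a: "\<And>x. \<bar>deriv F x\<bar> \<le> \<bar>deriv F a\<bar>" using D_extrema(1)[OF F] by blast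
  have "Smax F = \<bar>deriv F a\<bar>" unfolding Smax_def by (rule cSup_eq_maximum) (use a in auto)
  then show ?thesis using a by auto
qed

lemma Smin_bound:
  assumes F: "F \<in> Diff1t \<tau>"
  shows "\<exists>b. Smin F = \<bar>deriv F b\<bar> \<and> (\<forall>x. Smin F \<le> \<bar>deriv F x\<bar>)"
proof -
  obtain b where b: "\<And>x. \<bar>deriv F b\<bar> \<le> \<bar>deriv F x\<bar>" using D_extrema(2)[OF F] by blast
  have "Smin F = \<bar>deriv F b\<bar>" unfolding Smin_def by (rule cInf_eq_minimum) (use b in auto)
  then show ?thesis using b by auto
qed

lemma Smin_pos: "F \<in> Diff1t \<tau> \<Longrightarrow> 0 < Smin F"
  using Smin_bound[of F \<tau>] D1_nz[of F \<tau>] by force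

lemma Smin_le: "F \<in> Diff1t \<tau> \<Longrightarrow> Smin F \<le> \<bar>deriv F x\<bar>"
  using Smin_bound[of F \<tau>] by blast
lemma Smax_ge: "F \<in> Diff1t \<tau> \<Longrightarrow> \<bar>deriv F x\<bar> \<le> Smax F"
  using Smax_bound[of F \<tau>] by blast

lemma D_C1:
  assumes F: "F \<in> Diff1t \<tau>" and G: "G \<in> Diff1t \<tau>"
  shows "\<bar>deriv F x - deriv G x\<bar> \<le> C1dist F G"
proof -
  have fr: "frac x \<in> {0..1}" using frac_lt_1[of x] frac_ge_0[of x] by auto
  have "\<bar>deriv F x - deriv G x\<bar> = \<bar>deriv F (frac x) - deriv G (frac x)\<bar>"
    using D_frac[OF F] D_frac[OF G] by metis
  also have "\<dots> \<le> (SUP x\<in>{0..1}. \<bar>deriv F x - deriv G x\<bar>)"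
  proof (rule cSUP_upper[OF fr])
    show "bdd_above ((\<lambda>x. \<bar>deriv F x - deriv G x\<bar>) ` {0..1})"
    proof (rule bdd_aboveI2)
      fix y show "\<bar>deriv F y - deriv G y\<bar> \<le> Smax F + Smax G"
        using Smax_ge[OF F, of y] Smax_ge[OF G, of y] by linarith
    qed
  qed
  also have "\<dots> \<le> C1dist F G"
  proof -
    have "0 \<le> cdist (F 0) (G 0)" by (rule cdist_nonneg)
    also have "\<dots> \<le> (SUP x\<in>{0..1}. cdist (F x) (G x))"
      by (rule cSUP_upper) (auto intro!: bdd_aboveI2 cdist_le_half)
    finally show ?thesis unfolding C1dist_def by simp
  qed
  finally show ?thesis .
qed

lemma cdist_exI: "0 \<le> \<delta> \<Longrightarrow> \<exists>a b. cdist a b \<le> \<delta>"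
  by (rule exI[of _ 0], rule exI[of _ 0]) simp

lemma ln_ratio: "0 < (a::real) \<Longrightarrow> 0 < b \<Longrightarrow> ln (a / b) = ln a - ln b"
  by (rule ln_divide_pos)

lemma at_bound:
  assumes F: "F \<in> Diff1t \<tau>"
  shows "\<bar>ln (\<bar>deriv F x\<bar> / \<bar>deriv F y\<bar>)\<bar> \<le> ln (Smax F) - ln (Smin F)"
proof -
  have m: "0 < Smin F" by (rule Smin_pos[OF F])
  have a: "Smin F \<le> \<bar>deriv F x\<bar>" "\<bar>deriv F x\<bar> \<le> Smax F" using Smin_le[OF F] Smax_ge[OF F] by auto
  have b: "Smin F \<le> \<bar>deriv F y\<bar>" "\<bar>deriv F y\<bar> \<le> Smax F" using Smin_le[OF F] Smax_ge[OF F] by auto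
  have "ln (\<bar>deriv F x\<bar> / \<bar>deriv F y\<bar>) = ln \<bar>deriv F x\<bar> - ln \<bar>deriv F y\<bar>"
    using a b m by (intro ln_ratio) auto
  moreover have "ln (Smin F) \<le> ln \<bar>deriv F x\<bar>" "ln \<bar>deriv F x\<bar> \<le> ln (Smax F)"
    "ln (Smin F) \<le> ln \<bar>deriv F y\<bar>" "ln \<bar>deriv F y\<bar> \<le> ln (Smax F)"
    using a b m by auto
  ultimately show ?thesis by linarith
qed

lemma alpha_bdd:
  assumes F: "F \<in> Diff1t \<tau>"
  shows "bdd_above ((\<lambda>xy. \<bar>ln (\<bar>deriv F (fst xy)\<bar> / \<bar>deriv F (snd xy)\<bar>)\<bar>) ` S)"
  by (rule bdd_aboveI2[where M="ln (Smax F) - ln (Smin F)"]) (rule at_bound[OF F])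

lemma alpha_nonneg:
  assumes F: "F \<in> Diff1t \<tau>" and d: "0 \<le> \<delta>"
  shows "0 \<le> alpha F \<delta>"
proof -
  have "\<bar>ln (\<bar>deriv F (fst (0::real,0::real))\<bar> / \<bar>deriv F (snd (0::real,0::real))\<bar>)\<bar> \<le> alpha F \<delta>"
    unfolding alpha_def by (rule cSUP_upper[OF _ alpha_bdd[OF F]]) (use d in auto)
  then show ?thesis using D1_nz[OF F, of 0] by simp
qed

lemma alpha_le_B:
  assumes F: "F \<in> Diff1t \<tau>" and d: "0 \<le> \<delta>"
  shows "alpha F \<delta> \<le> ln (Smax F) - ln (Smin F)"
  unfolding alpha_def
  by (rule cSUP_least) (use d at_bound[OF F] in \<open>auto intro: cdist_exI\<close>)

lemma alpha_mono:
  assumes F: "F \<in> Diff1t \<tau>" and d: "0 \<le> \<delta>" "\<delta> \<le> \<delta>'"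
  shows "alpha F \<delta> \<le> alpha F \<delta>'"
  unfolding alpha_def
  by (rule cSUP_subset_mono[OF _ alpha_bdd[OF F]]) (use d in \<open>auto intro: cdist_exI\<close>)

lemma alpha_small:
  assumes F: "F \<in> Diff1t \<tau>" and e: "0 < e"
  shows "\<exists>d>0. \<forall>\<delta>. 0 \<le> \<delta> \<longrightarrow> \<delta> < d \<longrightarrow> alpha F \<delta> \<le> e"
proof -
  define L where "L x = ln \<bar>deriv F x\<bar>" for x
  have Lc: "continuous_on UNIV L" unfolding L_def
    by (intro continuous_on_ln continuous_intros D1_cont[OF F]) (use D1_nz[OF F] in auto)
  have "uniformly_continuous_on {-1..2} L"
    by (rule compact_uniformly_continuous[OF continuous_on_subset[OF Lc]]) auto
  then obtain d where d: "d > 0" and dd: "\<And>x x'. x \<in> {-1..2} \<Longrightarrow> x' \<in> {-1..2} \<Longrightarrow> dist x' x < d \<Longrightarrow> dist (L x') (L x) < e"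
    unfolding uniformly_continuous_on_def using e by metis
  have Lint: "L (x + of_int n) = L x" for x n unfolding L_def using D_per_int[OF F] by simp
  show ?thesis
  proof (intro exI[of _ "min d (1/2)"] conjI allI impI)
    show "0 < min d (1/2)" using d by simp
    fix \<delta> :: real assume d0: "0 \<le> \<delta>" and dl: "\<delta> < min d (1/2)"
    show "alpha F \<delta> \<le> e" unfolding alpha_def
    proof (rule cSUP_least)
      show "{(x, y). cdist x y \<le> \<delta>} \<noteq> {}" using d0 by (auto intro: cdist_exI)
      fix xy :: "real \<times> real" assume "xy \<in> {(x, y). cdist x y \<le> \<delta>}"
      then obtain x y where xy: "xy = (x, y)" and c: "cdist x y \<le> \<delta>" by auto
      define r where "r = round (x - y)"
      define fl where "fl = \<lfloor>x\<rfloor>"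
      define x2 where "x2 = x + of_int (- fl)"
      define y2 where "y2 = y + of_int (r - fl)"
      have c': "\<bar>x - y - of_int r\<bar> \<le> \<delta>" using c unfolding cdist_def r_def .
      have fl1: "real_of_int \<lfloor>x\<rfloor> \<le> x" by (rule of_int_floor_le)
      have fl2: "x < real_of_int \<lfloor>x\<rfloor> + 1" by (rule real_of_int_floor_add_one_gt)
      have x2a: "0 \<le> x2" "x2 \<le> 1" unfolding x2_def fl_def of_int_minus using fl1 fl2 by linarith+
      then have x2: "x2 \<in> {-1..2}" by simp
      have dist: "\<bar>x2 - y2\<bar> \<le> \<delta>" unfolding x2_def y2_def using c' by (simp add: algebra_simps)
      have y2: "y2 \<in> {-1..2}" using x2a dist dl by (auto simp: abs_le_iff)
      have "dist (L x2) (L y2) < e"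
        by (rule dd[OF y2 x2]) (use dist dl in \<open>auto simp: dist_real_def abs_minus_commute\<close>)
      moreover have "L x2 = L x" "L y2 = L y" unfolding x2_def y2_def by (rule Lint)+
      moreover have "ln (\<bar>deriv F x\<bar> / \<bar>deriv F y\<bar>) = L x - L y"
        unfolding L_def using D1_nz[OF F] by (intro ln_ratio) auto
      ultimately show "\<bar>ln (\<bar>deriv F (fst xy)\<bar> / \<bar>deriv F (snd xy)\<bar>)\<bar> \<le> e"
        unfolding xy by (simp add: dist_real_def)
    qed
  qed
qed

lemma ln_diff_le:
  assumes a: "0 < (a::real)" and b: "0 < b"
  shows "\<bar>ln a - ln b\<bar> \<le> \<bar>a - b\<bar> / min a b"
proof (cases "b \<le> a")
  case True
  have "ln a - ln b = ln (a / b)" using a b by (simp add: ln_ratio)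
  also have "\<dots> \<le> a / b - 1" using a b by (intro ln_le_minus_one) simp
  also have "\<dots> = (a - b) / b" using b by (simp add: field_simps)
  finally have "ln a - ln b \<le> (a - b) / b" .
  moreover have "0 \<le> ln a - ln b" using True a b by simp
  ultimately show ?thesis using True by (simp add: min_def)
next
  case False
  have "ln b - ln a = ln (b / a)" using a b by (simp add: ln_ratio)
  also have "\<dots> \<le> b / a - 1" using a b by (intro ln_le_minus_one) simp
  also have "\<dots> = (b - a) / a" using a by (simp add: field_simps)
  finally have "ln b - ln a \<le> (b - a) / a" .
  moreover have "0 \<le> ln b - ln a" using False a b by simp
  ultimately show ?thesis using False by (simp add: min_def)
qed

lemma SUP_close:
  fixes f g :: "'a \<Rightarrow> real"
  assumes X: "X \<noteq> {}" and bf: "bdd_above (f ` X)" and bg: "bdd_above (g ` X)"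
    and cl: "\<And>x. x \<in> X \<Longrightarrow> \<bar>f x - g x\<bar> \<le> e"
  shows "\<bar>(SUP x\<in>X. f x) - (SUP x\<in>X. g x)\<bar> \<le> e"
proof -
  have "(SUP x\<in>X. f x) \<le> (SUP x\<in>X. g x) + e"
  proof (rule cSUP_least[OF X])
    fix x assume x: "x \<in> X"
    have "g x \<le> (SUP x\<in>X. g x)" by (rule cSUP_upper[OF x bg])
    then show "f x \<le> (SUP x\<in>X. g x) + e" using cl[OF x] by linarith
  qed
  moreover have "(SUP x\<in>X. g x) \<le> (SUP x\<in>X. f x) + e"
  proof (rule cSUP_least[OF X])
    fix x assume x: "x \<in> X"
    have "f x \<le> (SUP x\<in>X. f x)" by (rule cSUP_upper[OF x bf])
    then show "g x \<le> (SUP x\<in>X. f x) + e" using cl[OF x] by linarith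
  qed
  ultimately show ?thesis by linarith
qed

lemma alpha_cont:
  assumes F: "F \<in> Diff1t \<tau>" and G: "G \<in> Diff1t \<tau>" and d: "0 \<le> \<delta>"
    and r: "0 \<le> r" "r \<le> Smin F / 2" and close: "\<And>x. \<bar>deriv G x - deriv F x\<bar> \<le> r"
  shows "\<bar>alpha G \<delta> - alpha F \<delta>\<bar> \<le> 4 * r / Smin F"
proof -
  define m where "m = Smin F"
  have m: "0 < m" unfolding m_def by (rule Smin_pos[OF F])
  have dF: "m \<le> \<bar>deriv F x\<bar>" for x unfolding m_def by (rule Smin_le[OF F])
  have dG: "m / 2 \<le> \<bar>deriv G x\<bar>" for x using dF[of x] close[of x] r unfolding m_def[symmetric] by linarith
  have LL: "\<bar>ln \<bar>deriv G x\<bar> - ln \<bar>deriv F x\<bar>\<bar> \<le> 2 * r / m" for x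
  proof -
    have "\<bar>ln \<bar>deriv G x\<bar> - ln \<bar>deriv F x\<bar>\<bar> \<le> \<bar>\<bar>deriv G x\<bar> - \<bar>deriv F x\<bar>\<bar> / min \<bar>deriv G x\<bar> \<bar>deriv F x\<bar>"
      using dF[of x] dG[of x] m by (intro ln_diff_le) auto
    also have "\<dots> \<le> r / (m / 2)"
    proof (rule frac_le)
      show "0 \<le> r" by fact
      show "\<bar>\<bar>deriv G x\<bar> - \<bar>deriv F x\<bar>\<bar> \<le> r" using close[of x] by linarith
      show "0 < m / 2" using m by simp
      show "m / 2 \<le> min \<bar>deriv G x\<bar> \<bar>deriv F x\<bar>" using dF[of x] dG[of x] m by simp
    qed
    also have "\<dots> = 2 * r / m" by simp
    finally show ?thesis .
  qed
  have tG: "\<bar>ln (\<bar>deriv G x\<bar> / \<bar>deriv G y\<bar>)\<bar> = \<bar>ln \<bar>deriv G x\<bar> - ln \<bar>deriv G y\<bar>\<bar>" for x y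
    using D1_nz[OF G] by (simp add: ln_ratio)
  have tF: "\<bar>ln (\<bar>deriv F x\<bar> / \<bar>deriv F y\<bar>)\<bar> = \<bar>ln \<bar>deriv F x\<bar> - ln \<bar>deriv F y\<bar>\<bar>" for x y
    using D1_nz[OF F] by (simp add: ln_ratio)
  have "\<bar>alpha G \<delta> - alpha F \<delta>\<bar> \<le> 2 * r / m + 2 * r / m"
    unfolding alpha_def
  proof (rule SUP_close[OF _ alpha_bdd[OF G] alpha_bdd[OF F]])
    show "{(x, y). cdist x y \<le> \<delta>} \<noteq> {}" using d by (auto intro: cdist_exI)
    fix xy :: "real \<times> real"
    obtain x y where xy: "xy = (x, y)" by fastforce
    show "\<bar>\<bar>ln (\<bar>deriv G (fst xy)\<bar> / \<bar>deriv G (snd xy)\<bar>)\<bar> - \<bar>ln (\<bar>deriv F (fst xy)\<bar> / \<bar>deriv F (snd xy)\<bar>)\<bar>\<bar>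
          \<le> 2 * r / m + 2 * r / m"
      unfolding xy fst_conv snd_conv tG tF
    proof -
      define p where "p = ln \<bar>deriv G x\<bar>"
      define q where "q = ln \<bar>deriv G y\<bar>"
      define p' where "p' = ln \<bar>deriv F x\<bar>"
      define q' where "q' = ln \<bar>deriv F y\<bar>"
      have "\<bar>\<bar>p - q\<bar> - \<bar>p' - q'\<bar>\<bar> \<le> \<bar>(p - q) - (p' - q')\<bar>" by (rule abs_triangle_ineq3)
      also have "\<dots> = \<bar>(p - p') + (q' - q)\<bar>" by (simp add: algebra_simps)
      also have "\<dots> \<le> \<bar>p - p'\<bar> + \<bar>q' - q\<bar>" by (rule abs_triangle_ineq)
      also have "\<bar>q' - q\<bar> = \<bar>q - q'\<bar>" by (rule abs_minus_commute)
      finally have "\<bar>\<bar>p - q\<bar> - \<bar>p' - q'\<bar>\<bar> \<le> \<bar>p - p'\<bar> + \<bar>q - q'\<bar>" .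
      moreover have "\<bar>p - p'\<bar> \<le> 2 * r / m" unfolding p_def p'_def by (rule LL)
      moreover have "\<bar>q - q'\<bar> \<le> 2 * r / m" unfolding q_def q'_def by (rule LL)
      ultimately show "\<bar>\<bar>p - q\<bar> - \<bar>p' - q'\<bar>\<bar> \<le> 2 * r / m + 2 * r / m"
        unfolding p_def q_def p'_def q'_def by linarith
    qed
  qed
  then show ?thesis unfolding m_def by simp
qed

lemma Smax_cont:
  assumes F: "F \<in> Diff1t \<tau>" and G: "G \<in> Diff1t \<tau>" and close: "\<And>x. \<bar>deriv G x - deriv F x\<bar> \<le> r"
  shows "\<bar>Smax G - Smax F\<bar> \<le> r"
proof -
  obtain a where a: "Smax G = \<bar>deriv G a\<bar>" using Smax_bound[OF G] by blast
  obtain b where b: "Smax F = \<bar>deriv F b\<bar>" using Smax_bound[OF F] by blast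
  have "\<bar>deriv F a\<bar> \<le> Smax F" "\<bar>deriv G b\<bar> \<le> Smax G" using Smax_ge[OF F] Smax_ge[OF G] by auto
  then show ?thesis using a b close[of a] close[of b] by linarith
qed

lemma Smin_cont:
  assumes F: "F \<in> Diff1t \<tau>" and G: "G \<in> Diff1t \<tau>" and close: "\<And>x. \<bar>deriv G x - deriv F x\<bar> \<le> r"
  shows "\<bar>Smin G - Smin F\<bar> \<le> r"
proof -
  obtain a where a: "Smin G = \<bar>deriv G a\<bar>" using Smin_bound[OF G] by blast
  obtain b where b: "Smin F = \<bar>deriv F b\<bar>" using Smin_bound[OF F] by blast
  have "Smin F \<le> \<bar>deriv F a\<bar>" "Smin G \<le> \<bar>deriv G b\<bar>" using Smin_le[OF F] Smin_le[OF G] by auto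
  then show ?thesis using a b close[of a] close[of b] by linarith
qed

lemma C1_meas:
  fixes \<nu> :: "(real \<Rightarrow> real) measure" and g :: "(real \<Rightarrow> real) \<Rightarrow> real"
  assumes sp: "space \<nu> = Diff1t \<tau>" and st: "sets \<nu> = sigma_sets (Diff1t \<tau>) {U. C1open \<tau> U}"
    and cont: "\<And>F e. F \<in> Diff1t \<tau> \<Longrightarrow> e > 0 \<Longrightarrow> \<exists>r>0. \<forall>G\<in>Diff1t \<tau>.
                  (\<forall>x. \<bar>deriv G x - deriv F x\<bar> \<le> r) \<longrightarrow> \<bar>g G - g F\<bar> < e"
  shows "g \<in> borel_measurable \<nu>"
  unfolding borel_measurable_iff_less
proof
  fix a :: real
  have "C1open \<tau> {F\<in>Diff1t \<tau>. g F < a}"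
    unfolding C1open_def
  proof (intro conjI ballI)
    fix F assume "F \<in> {F\<in>Diff1t \<tau>. g F < a}"
    then have F: "F \<in> Diff1t \<tau>" and ga: "g F < a" by auto
    obtain r where r: "r > 0" and rr: "\<And>G. G \<in> Diff1t \<tau> \<Longrightarrow> (\<forall>x. \<bar>deriv G x - deriv F x\<bar> \<le> r) \<Longrightarrow> \<bar>g G - g F\<bar> < a - g F"
      using cont[OF F, of "a - g F"] ga by auto
    show "\<exists>r>0. \<forall>G\<in>Diff1t \<tau>. C1dist F G < r \<longrightarrow> G \<in> {F \<in> Diff1t \<tau>. g F < a}"
    proof (intro exI[of _ r] conjI ballI impI)
      fix G assume G: "G \<in> Diff1t \<tau>" and c: "C1dist F G < r"
      have "\<forall>x. \<bar>deriv G x - deriv F x\<bar> \<le> r"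
        using D_C1[OF F G] c by (metis abs_minus_commute less_imp_le order_trans)
      then have "\<bar>g G - g F\<bar> < a - g F" by (rule rr[OF G])
      then show "G \<in> {F \<in> Diff1t \<tau>. g F < a}" using G by auto
    qed (use r in auto)
  qed auto
  then have "{F\<in>Diff1t \<tau>. g F < a} \<in> sets \<nu>" unfolding st by (intro sigma_sets.Basic) auto
  then show "{w \<in> space \<nu>. g w < a} \<in> sets \<nu>" unfolding sp .
qed



lemma avg_to_zero:
  fixes a :: "nat \<Rightarrow> real \<Rightarrow> real" and \<epsilon> \<delta> c :: "nat \<Rightarrow> real"
  assumes nonneg: "\<And>j d. 0 < d \<Longrightarrow> 0 \<le> a j d"
    and mono: "\<And>j d d'. 0 < d \<Longrightarrow> d \<le> d' \<Longrightarrow> a j d \<le> a j d'"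
    and epos: "\<And>n. \<epsilon> n > 0" and elim: "\<epsilon> \<longlonglongrightarrow> 0"
    and dpos: "\<And>k. \<delta> k > 0" and clim: "c \<longlonglongrightarrow> 0"
    and H: "\<And>k. \<exists>C. \<forall>\<^sub>F n in sequentially. (\<Sum>j=1..n. a j (\<delta> k)) \<le> C + real n * c k"
  shows "(\<lambda>n. (\<Sum>j=1..n. a j (\<epsilon> j)) / real n) \<longlonglongrightarrow> 0"
  unfolding lim_sequentially
proof (intro allI impI)
  fix r :: real assume r: "r > 0"
  have "\<forall>\<^sub>F k in sequentially. c k < r / 2"
    by (rule order_tendstoD(2)[OF clim]) (use r in simp)
  then obtain k where ck: "c k < r / 2" by (auto simp: eventually_sequentially)
  obtain C N0 where CN0: "\<And>n. n \<ge> N0 \<Longrightarrow> (\<Sum>j=1..n. a j (\<delta> k)) \<le> C + real n * c k"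
    using H[of k] by (auto simp: eventually_sequentially)
  have "\<forall>\<^sub>F j in sequentially. \<epsilon> j < \<delta> k"
    by (rule order_tendstoD(2)[OF elim dpos])
  then obtain N1 where N1: "\<And>j. j \<ge> N1 \<Longrightarrow> \<epsilon> j \<le> \<delta> k"
    unfolding eventually_sequentially using less_imp_le by blast
  define C' where "C' = (\<Sum>j<N1. a j (\<epsilon> j))"
  have C'0: "0 \<le> C'" unfolding C'_def using nonneg epos by (intro sum_nonneg) auto
  obtain N2 :: nat where N2: "real N2 > 2 * (\<bar>C\<bar> + C') / r" using reals_Archimedean2 by blast
  show "\<exists>no. \<forall>n\<ge>no. dist ((\<Sum>j=1..n. a j (\<epsilon> j)) / real n) 0 < r"
  proof (intro exI[of _ "max (max N0 N2) 1"] allI impI)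
    fix n assume n: "max (max N0 N2) 1 \<le> n"
    then have n0: "n \<ge> N0" and n2: "real n \<ge> real N2" and n1: "n \<ge> 1" by auto
    have npos: "0 < real n" using n1 by simp
    have "(\<Sum>j=1..n. a j (\<epsilon> j)) \<le> (\<Sum>j=1..n. (if j \<in> {..<N1} then a j (\<epsilon> j) else 0) + a j (\<delta> k))"
    proof (rule sum_mono)
      fix j assume "j \<in> {1..n}"
      show "a j (\<epsilon> j) \<le> (if j \<in> {..<N1} then a j (\<epsilon> j) else 0) + a j (\<delta> k)"
      proof (cases "j < N1")
        case True then show ?thesis using nonneg[OF dpos[of k], of j] by simp
      next
        case False then show ?thesis using mono[OF epos N1[of j]] by simp
      qed
    qed
    also have "\<dots> = (\<Sum>j\<in>{1..n} \<inter> {..<N1}. a j (\<epsilon> j)) + (\<Sum>j=1..n. a j (\<delta> k))"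
      by (simp add: sum.distrib sum.inter_restrict)
    also have "(\<Sum>j\<in>{1..n} \<inter> {..<N1}. a j (\<epsilon> j)) \<le> C'"
      unfolding C'_def by (rule sum_mono2) (use nonneg epos in auto)
    finally have s: "(\<Sum>j=1..n. a j (\<epsilon> j)) \<le> C' + C + real n * c k" using CN0[OF n0] by simp
    have s0: "0 \<le> (\<Sum>j=1..n. a j (\<epsilon> j))" using nonneg epos by (intro sum_nonneg) auto
    have f1: "(C' + C) / real n < r / 2"
    proof -
      have "2 * (\<bar>C\<bar> + C') / r < real n" using N2 n2 by linarith
      then have "2 * (\<bar>C\<bar> + C') < real n * r" using r by (simp add: pos_divide_less_eq)
      then have "C' + C < real n * (r / 2)" unfolding times_divide_eq_right
        using abs_ge_self[of C] by argo
      then show ?thesis using npos by (simp add: pos_divide_less_eq mult.commute)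
    qed
    have f2: "(\<Sum>j=1..n. a j (\<epsilon> j)) / real n \<le> (C' + C) / real n + c k"
    proof -
      have "(\<Sum>j=1..n. a j (\<epsilon> j)) / real n \<le> (C' + C + real n * c k) / real n"
        using s npos by (intro divide_right_mono) auto
      also have "\<dots> = (C' + C) / real n + c k" using npos by (simp add: add_divide_distrib)
      finally show ?thesis .
    qed
    have f3: "dist ((\<Sum>j=1..n. a j (\<epsilon> j)) / real n) 0 = (\<Sum>j=1..n. a j (\<epsilon> j)) / real n"
      using s0 npos by (simp add: dist_real_def)
    show "dist ((\<Sum>j=1..n. a j (\<epsilon> j)) / real n) 0 < r"
      unfolding f3 using f1 f2 ck by linarith
  qed
qed

theorem lemma3p1:
  fixes \<tau> :: real and \<nu> :: "(real \<Rightarrow> real) measure"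
  assumes "\<tau> > 0"
    and "prob_space \<nu>"
    and "space \<nu> = Diff1t \<tau>"
    and "sets \<nu> = sigma_sets (Diff1t \<tau>) {U. C1open \<tau> U}"
    and "(\<integral>\<^sup>+ F. ennreal (ln (SUP x. \<bar>deriv F x\<bar>)) \<partial>\<nu>) < \<infinity>"
    and "(\<integral>\<^sup>+ F. ennreal (- ln (INF x. \<bar>deriv F x\<bar>)) \<partial>\<nu>) < \<infinity>"
    and "proximal (semigr (supp \<tau> \<nu>))"
    and "\<not> fixes_point (semigr (supp \<tau> \<nu>))"
  shows "AE \<omega> in (\<Pi>\<^sub>M n\<in>(UNIV::nat set). \<nu>).
           \<forall>\<epsilon>::nat \<Rightarrow> real. (\<forall>n. \<epsilon> n > 0) \<longrightarrow> \<epsilon> \<longlonglongrightarrow> 0 \<longrightarrow>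
             (\<lambda>n. (\<Sum>j=1..n. alpha (\<omega> j) (\<epsilon> j)) / real n) \<longlonglongrightarrow> 0"
proof -
  note sp = assms(3) and st = assms(4)
  interpret nu: prob_space \<nu> by fact
  define a where "a k F = alpha F (1 / real (Suc k))" for k F
  define B where "B F = ln (Smax F) - ln (Smin F)" for F
  have Smax_m[measurable]: "Smax \<in> borel_measurable \<nu>"
  proof (rule C1_meas[OF sp st])
    fix F :: "real \<Rightarrow> real" and e :: real assume F: "F \<in> Diff1t \<tau>" and e: "e > 0"
    show "\<exists>r>0. \<forall>G\<in>Diff1t \<tau>. (\<forall>x. \<bar>deriv G x - deriv F x\<bar> \<le> r) \<longrightarrow> \<bar>Smax G - Smax F\<bar> < e"
    proof (intro exI[of _ "e/2"] conjI ballI impI)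
      fix G assume G: "G \<in> Diff1t \<tau>" and c: "\<forall>x. \<bar>deriv G x - deriv F x\<bar> \<le> e / 2"
      have "\<bar>Smax G - Smax F\<bar> \<le> e / 2" using c by (intro Smax_cont[OF F G]) auto
      then show "\<bar>Smax G - Smax F\<bar> < e" using e by linarith
    qed (use e in auto)
  qed
  have Smin_m[measurable]: "Smin \<in> borel_measurable \<nu>"
  proof (rule C1_meas[OF sp st])
    fix F :: "real \<Rightarrow> real" and e :: real assume F: "F \<in> Diff1t \<tau>" and e: "e > 0"
    show "\<exists>r>0. \<forall>G\<in>Diff1t \<tau>. (\<forall>x. \<bar>deriv G x - deriv F x\<bar> \<le> r) \<longrightarrow> \<bar>Smin G - Smin F\<bar> < e"
    proof (intro exI[of _ "e/2"] conjI ballI impI)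
      fix G assume G: "G \<in> Diff1t \<tau>" and c: "\<forall>x. \<bar>deriv G x - deriv F x\<bar> \<le> e / 2"
      have "\<bar>Smin G - Smin F\<bar> \<le> e / 2" using c by (intro Smin_cont[OF F G]) auto
      then show "\<bar>Smin G - Smin F\<bar> < e" using e by linarith
    qed (use e in auto)
  qed
  have a_m[measurable]: "a k \<in> borel_measurable \<nu>" for k
  proof (rule C1_meas[OF sp st])
    fix F :: "real \<Rightarrow> real" and e :: real assume F: "F \<in> Diff1t \<tau>" and e: "e > 0"
    define m where "m = Smin F"
    have m: "0 < m" unfolding m_def by (rule Smin_pos[OF F])
    define r where "r = min (m/2) (e * m / 8)"
    have r: "0 < r" "r \<le> m / 2" "r \<le> e * m / 8" unfolding r_def using m e by auto
    show "\<exists>r>0. \<forall>G\<in>Diff1t \<tau>. (\<forall>x. \<bar>deriv G x - deriv F x\<bar> \<le> r) \<longrightarrow> \<bar>a k G - a k F\<bar> < e"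
    proof (intro exI[of _ r] conjI ballI impI)
      fix G assume G: "G \<in> Diff1t \<tau>" and c: "\<forall>x. \<bar>deriv G x - deriv F x\<bar> \<le> r"
      have "\<bar>a k G - a k F\<bar> \<le> 4 * r / m" unfolding a_def m_def
        by (rule alpha_cont[OF F G]) (use r c in \<open>auto simp: m_def\<close>)
      also have "\<dots> \<le> 4 * (e * m / 8) / m" using r m by (intro divide_right_mono) auto
      also have "\<dots> = e / 2" using m by simp
      finally show "\<bar>a k G - a k F\<bar> < e" using e by linarith
    qed (use r in auto)
  qed
  have B_m[measurable]: "B \<in> borel_measurable \<nu>" unfolding B_def by measurable
  have a0: "F \<in> space \<nu> \<Longrightarrow> 0 \<le> a k F" for F k
    unfolding a_def sp by (rule alpha_nonneg) auto
  have aB: "F \<in> space \<nu> \<Longrightarrow> a k F \<le> B F" for F k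
    unfolding a_def sp B_def by (rule alpha_le_B) auto
  have B_int: "integrable \<nu> B"
  proof (rule integrableI_nonneg)
    show "B \<in> borel_measurable \<nu>" by measurable
    show "AE x in \<nu>. 0 \<le> B x"
    proof (rule AE_I2)
      fix x assume "x \<in> space \<nu>"
      then show "0 \<le> B x" using a0[of x 0] aB[of x 0] by linarith
    qed
    have "(\<integral>\<^sup>+ F. ennreal (B F) \<partial>\<nu>) \<le> (\<integral>\<^sup>+ F. ennreal (ln (Smax F)) + ennreal (- ln (Smin F)) \<partial>\<nu>)"
    proof (rule nn_integral_mono)
      fix F
      have "ennreal (B F) \<le> ennreal (max (ln (Smax F)) 0 + max (- ln (Smin F)) 0)"
        unfolding B_def by (rule ennreal_leI) linarith
      also have "\<dots> = ennreal (max (ln (Smax F)) 0) + ennreal (max (- ln (Smin F)) 0)"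
        by (rule ennreal_plus) auto
      also have "\<dots> = ennreal (ln (Smax F)) + ennreal (- ln (Smin F))"
        by (simp add: ennreal_max_0')
      finally show "ennreal (B F) \<le> ennreal (ln (Smax F)) + ennreal (- ln (Smin F))" .
    qed
    also have "\<dots> = (\<integral>\<^sup>+ F. ennreal (ln (Smax F)) \<partial>\<nu>) + (\<integral>\<^sup>+ F. ennreal (- ln (Smin F)) \<partial>\<nu>)"
      by (rule nn_integral_add) auto
    also have "\<dots> < \<infinity>" using assms(5,6) unfolding Smax_def[symmetric] Smin_def[symmetric] by simp
    finally show "(\<integral>\<^sup>+ F. ennreal (B F) \<partial>\<nu>) < \<infinity>" .
  qed
  have a_int: "integrable \<nu> (a k)" for k
  proof (rule Bochner_Integration.integrable_bound[OF B_int])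
    show "a k \<in> borel_measurable \<nu>" by measurable
    show "AE x in \<nu>. norm (a k x) \<le> norm (B x)"
    proof (rule AE_I2)
      fix x assume x: "x \<in> space \<nu>"
      have "0 \<le> a k x" "a k x \<le> B x" using a0[OF x] aB[OF x] by auto
      then show "norm (a k x) \<le> norm (B x)" unfolding real_norm_def by linarith
    qed
  qed
  have a_pt: "(\<lambda>k. a k F) \<longlonglongrightarrow> 0" if F: "F \<in> Diff1t \<tau>" for F
    unfolding lim_sequentially
  proof (intro allI impI)
    fix e :: real assume e: "e > 0"
    obtain d where d: "d > 0" and dd: "\<And>\<delta>. 0 \<le> \<delta> \<Longrightarrow> \<delta> < d \<Longrightarrow> alpha F \<delta> \<le> e / 2"
      using alpha_small[OF F, of "e/2"] e by auto
    obtain N where N: "inverse (real (Suc N)) < d" using reals_Archimedean[OF d] by blast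
    show "\<exists>no. \<forall>n\<ge>no. dist (a n F) 0 < e"
    proof (intro exI[of _ N] allI impI)
      fix n assume n: "N \<le> n"
      have "1 / real (Suc n) \<le> 1 / real (Suc N)" using n by (intro divide_left_mono) auto
      moreover have "1 / real (Suc N) = inverse (real (Suc N))" by (rule inverse_eq_divide[symmetric])
      ultimately have "1 / real (Suc n) < d" using N by linarith
      then have "a n F \<le> e / 2" unfolding a_def by (intro dd) auto
      moreover have "0 \<le> a n F" using a0[of F n] F sp by simp
      ultimately show "dist (a n F) 0 < e" using e by (simp add: dist_real_def)
    qed
  qed
  have lim: "(\<lambda>k. integral\<^sup>L \<nu> (a k)) \<longlonglongrightarrow> 0"
  proof -
    have "(\<lambda>k. integral\<^sup>L \<nu> (a k)) \<longlonglongrightarrow> integral\<^sup>L \<nu> (\<lambda>_. 0)"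
    proof (rule integral_dominated_convergence[where w=B])
      show "AE x in \<nu>. (\<lambda>k. a k x) \<longlonglongrightarrow> 0" using a_pt sp by (auto intro!: AE_I2)
      show "AE x in \<nu>. norm (a k x) \<le> B x" for k
      proof (rule AE_I2)
        fix x assume x: "x \<in> space \<nu>"
        have "0 \<le> a k x" "a k x \<le> B x" using a0[OF x] aB[OF x] by auto
        then show "norm (a k x) \<le> B x" unfolding real_norm_def by linarith
      qed
    qed (auto intro: B_int)
    then show ?thesis by simp
  qed
  define c where "c k = 2 * (integral\<^sup>L \<nu> (a k) + 1 / real (Suc k))" for k
  have clim: "c \<longlonglongrightarrow> 0"
  proof -
    have "(\<lambda>k. 1 / real (Suc k)) \<longlonglongrightarrow> 0" using LIMSEQ_Suc[OF lim_1_over_n] by simp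
    then have "(\<lambda>k. 2 * (integral\<^sup>L \<nu> (a k) + 1 / real (Suc k))) \<longlonglongrightarrow> 2 * (0 + 0)"
      by (intro tendsto_intros lim)
    then show ?thesis unfolding c_def by simp
  qed
  have AEk: "AE \<omega> in (\<Pi>\<^sub>M n\<in>(UNIV::nat set). \<nu>). \<exists>C. \<forall>\<^sub>F n in sequentially.
            (\<Sum>j=1..n. a k (\<omega> j)) \<le> C + 2 * real n * (integral\<^sup>L \<nu> (a k) + 1 / real (Suc k))" for k
    by (rule slln_upper) (use a0 a_int assms(2) in auto)
  then have AEall: "AE \<omega> in (\<Pi>\<^sub>M n\<in>(UNIV::nat set). \<nu>). \<forall>k. \<exists>C. \<forall>\<^sub>F n in sequentially.
            (\<Sum>j=1..n. a k (\<omega> j)) \<le> C + 2 * real n * (integral\<^sup>L \<nu> (a k) + 1 / real (Suc k))"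
    by (simp add: AE_all_countable)
  show ?thesis
    using AEall AE_space
  proof eventually_elim
    case (elim \<omega>)
    have \<omega>D: "\<omega> j \<in> Diff1t \<tau>" for j using elim(2) sp by (auto simp: space_PiM)
    show ?case
    proof (intro allI impI)
      fix \<epsilon> :: "nat \<Rightarrow> real" assume epos: "\<forall>n. 0 < \<epsilon> n" and elim0: "\<epsilon> \<longlonglongrightarrow> 0"
      have f1: "\<And>j d. 0 < d \<Longrightarrow> 0 \<le> alpha (\<omega> j) d" by (rule alpha_nonneg[OF \<omega>D]) auto
      have f2: "\<And>j d d'. 0 < d \<Longrightarrow> d \<le> d' \<Longrightarrow> alpha (\<omega> j) d \<le> alpha (\<omega> j) d'"
        by (rule alpha_mono[OF \<omega>D]) auto
      have f3: "\<And>n. \<epsilon> n > 0" using epos by auto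
      have f5: "\<And>k. 1 / real (Suc k) > 0" by simp
      have f7: "\<exists>C. \<forall>\<^sub>F n in sequentially. (\<Sum>j=1..n. alpha (\<omega> j) (1 / real (Suc k))) \<le> C + real n * c k" for k
      proof -
        obtain C where C: "\<forall>\<^sub>F n in sequentially.
            (\<Sum>j=1..n. a k (\<omega> j)) \<le> C + 2 * real n * (integral\<^sup>L \<nu> (a k) + 1 / real (Suc k))"
          using elim(1) by blast
        show ?thesis
          by (intro exI[of _ C], rule eventually_mono[OF C]) (simp add: a_def c_def algebra_simps)
      qed
      show "(\<lambda>n. (\<Sum>j = 1..n. alpha (\<omega> j) (\<epsilon> j)) / real n) \<longlonglongrightarrow> 0"
        by (rule avg_to_zero[where a="\<lambda>j d. alpha (\<omega> j) d" and \<delta>="\<lambda>k. 1 / real (Suc k)" and c=c,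
              OF f1 f2 f3 elim0 f5 clim f7])
    qed
  qed
qed


end
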